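(* Consider a charged particle (mass $m>0$, charge $q$) moving in an external electromagnetic field with potential $(A^0,\mathbf A)$, described with the light-like parameter $\xi=ct-z$ by the Hamiltonian $\hat H(\hat{\mathbf x},\hat{\boldsymbol\Pi};\xi)$ defined in the context. (i) In a spacetime region where $A^\mu$ is independent of $t$, $\hat H$ is constant along the solutions of the Hamilton equations. (ii) More generally, if $A^0$ and $A^z$ are independent of $t$, then along any solution the dimensionless energy gain over $[\xi_0,\xi_1]$ is $$\mathcal E:=\frac{\hat H(\xi_1)-\hat H(\xi_0)}{mc^2}=\int_{\xi_0}^{\xi_1}\frac{d\xi}{2\hat s(\xi)}\,\frac{\partial\hat v}{\partial\xi}\big[\hat{\mathbf x}(\xi),\hat{\boldsymbol\Pi}(\xi);\xi\big],\qquad \hat v:=|\hat{\mathbf u}^{\perp}|^2 .$$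
   Context: Coordinates $\mathbf x=(x,y,z)$; superscript $\perp$ denotes $(x,y)$-components. For a field $f(t,\mathbf x)$, $\hat f(\xi,\hat{\mathbf x}):=f((\xi+\hat z)/c,\hat{\mathbf x})$; along a motion, $\hat g(\xi)$ denotes the value of a dynamical variable $g$ when $ct-z=\xi$; prime denotes $d/d\xi$. The Hamiltonian is $$\hat H(\hat{\mathbf x},\hat{\boldsymbol\Pi};\xi)=mc^2\,\frac{1+\hat s^2+|\hat{\mathbf u}^{\perp}|^2}{2\hat s}+q\hat A^0(\xi,\hat{\mathbf x}),\quad \hat{\mathbf u}^{\perp}=\frac{\hat{\boldsymbol\Pi}^{\perp}-q\hat{\mathbf A}^{\perp}(\xi,\hat{\mathbf x})}{mc^2},\quad \hat s=-\frac{\hat\Pi^z+q[\hat A^0-\hat A^z](\xi,\hat{\mathbf x})}{mc^2}>0,$$ with Hamilton equations $\hat{\mathbf x}'=\partial\hat H/\partial\hat{\boldsymbol\Pi}$, $\hat{\boldsymbol\Pi}'=-\partial\hat H/\partial\hat{\mathbf x}$ (equivalent to the relativistic Lorentz-force equations of motion; $\hat H$ equals the particle energy $mc^2\gamma+qA^0$). $\partial\hat v/\partial\xi$ denotes the partial derivative of $\hat v$, viewed as a function of $(\hat{\mathbf x},\hat{\boldsymbol\Pi},\xi)$, with respect to its explicit $\xi$-dependence. *)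

theory Defs
  imports "HOL-Analysis.Analysis"
begin

text \<open>Positions and canonical momenta are vectors in real^3; component 1 is x,
  component 2 is y, component 3 is z.  A scalar field is a function of (t, x).\<close>

type_synonym field = "real \<Rightarrow> real^3 \<Rightarrow> real"

definition hatf :: "real \<Rightarrow> field \<Rightarrow> real \<Rightarrow> real^3 \<Rightarrow> real" where
  "hatf c f \<xi> x = f ((\<xi> + x $ 3) / c) x"

definition s_hat :: "real \<Rightarrow> real \<Rightarrow> real \<Rightarrow> field \<Rightarrow> field
    \<Rightarrow> real^3 \<Rightarrow> real^3 \<Rightarrow> real \<Rightarrow> real" where
  "s_hat m c q A0 Az x P \<xi> =
     - (P $ 3 + q * (hatf c A0 \<xi> x - hatf c Az \<xi> x)) / (m * c\<^sup>2)"

definition ux_hat :: "real \<Rightarrow> real \<Rightarrow> real \<Rightarrow> field \<Rightarrow> real^3 \<Rightarrow> real^3 \<Rightarrow> real \<Rightarrow> real" where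
  "ux_hat m c q Ax x P \<xi> = (P $ 1 - q * hatf c Ax \<xi> x) / (m * c\<^sup>2)"

definition uy_hat :: "real \<Rightarrow> real \<Rightarrow> real \<Rightarrow> field \<Rightarrow> real^3 \<Rightarrow> real^3 \<Rightarrow> real \<Rightarrow> real" where
  "uy_hat m c q Ay x P \<xi> = (P $ 2 - q * hatf c Ay \<xi> x) / (m * c\<^sup>2)"

definition v_hat :: "real \<Rightarrow> real \<Rightarrow> real \<Rightarrow> field \<Rightarrow> field
    \<Rightarrow> real^3 \<Rightarrow> real^3 \<Rightarrow> real \<Rightarrow> real" where
  "v_hat m c q Ax Ay x P \<xi> = (ux_hat m c q Ax x P \<xi>)\<^sup>2 + (uy_hat m c q Ay x P \<xi>)\<^sup>2"

definition H_hat :: "real \<Rightarrow> real \<Rightarrow> real \<Rightarrow> field \<Rightarrow> field \<Rightarrow> field \<Rightarrow> field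
    \<Rightarrow> real^3 \<Rightarrow> real^3 \<Rightarrow> real \<Rightarrow> real" where
  "H_hat m c q A0 Ax Ay Az x P \<xi> =
     m * c\<^sup>2 * (1 + (s_hat m c q A0 Az x P \<xi>)\<^sup>2 + v_hat m c q Ax Ay x P \<xi>)
       / (2 * s_hat m c q A0 Az x P \<xi>)
     + q * hatf c A0 \<xi> x"

definition hamilton_solution ::
  "(real^3 \<Rightarrow> real^3 \<Rightarrow> real \<Rightarrow> real) \<Rightarrow> real set
     \<Rightarrow> (real \<Rightarrow> real^3) \<Rightarrow> (real \<Rightarrow> real^3) \<Rightarrow> bool" where
  "hamilton_solution H I X P \<longleftrightarrow>
     (\<forall>\<xi>\<in>I. \<exists>gP gX.
        GDERIV (\<lambda>p. H (X \<xi>) p \<xi>) (P \<xi>) :> gP \<and>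
        GDERIV (\<lambda>y. H y (P \<xi>) \<xi>) (X \<xi>) :> gX \<and>
        (X has_vector_derivative gP) (at \<xi> within I) \<and>
        (P has_vector_derivative (- gX)) (at \<xi> within I))"

definition time_indep_on :: "(real \<times> (real^3)) set \<Rightarrow> field \<Rightarrow> bool" where
  "time_indep_on U f \<longleftrightarrow>
     (\<forall>t x. (t, x) \<in> U \<longrightarrow> ((\<lambda>\<tau>. f \<tau> x) has_real_derivative 0) (at t))"

end

theory Submission imports Defs begin

lemma traj_deriv:
  fixes Hf :: "real^3 \<Rightarrow> real^3 \<Rightarrow> real \<Rightarrow> real"
  assumes dG: "(\<lambda>z. Hf (fst z) (fst (snd z)) (snd (snd z))) differentiable (at (X \<xi>, P \<xi>, \<xi>))"
    and gP: "GDERIV (\<lambda>p. Hf (X \<xi>) p \<xi>) (P \<xi>) :> gP"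
    and gX: "GDERIV (\<lambda>y. Hf y (P \<xi>) \<xi>) (X \<xi>) :> gX"
    and dX: "(X has_vector_derivative gP) (at \<xi> within I)"
    and dP: "(P has_vector_derivative (- gX)) (at \<xi> within I)"
    and dE: "((\<lambda>\<eta>. Hf (X \<xi>) (P \<xi>) \<eta>) has_real_derivative D) (at \<xi>)"
  shows "((\<lambda>\<xi>. Hf (X \<xi>) (P \<xi>) \<xi>) has_real_derivative D) (at \<xi> within I)"
proof -
  define G where "G = (\<lambda>z::(real^3) \<times> (real^3) \<times> real. Hf (fst z) (fst (snd z)) (snd (snd z)))"
  from dG obtain G' where G': "(G has_derivative G') (at (X \<xi>, P \<xi>, \<xi>))"
    unfolding G_def differentiable_def by blast
  have lin: "linear G'" using G' has_derivative_linear by blast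
  have e1: "G' (h, 0, 0) = h \<bullet> gX" for h
  proof -
    have "((\<lambda>y. G (y, P \<xi>, \<xi>)) has_derivative (\<lambda>h. G' (h, 0, 0))) (at (X \<xi>))"
    proof -
      have "((\<lambda>y. (y, P \<xi>, \<xi>)) has_derivative (\<lambda>h. (h, 0, 0))) (at (X \<xi>))" by (auto intro!: derivative_eq_intros simp: zero_prod_def)
      from has_derivative_compose[OF this, of G G'] G' show ?thesis by simp
    qed
    moreover have "((\<lambda>y. G (y, P \<xi>, \<xi>)) has_derivative (\<lambda>h. h \<bullet> gX)) (at (X \<xi>))"
      using gX unfolding G_def gderiv_def by simp
    ultimately show ?thesis using has_derivative_unique by metis
  qed
  have e2: "G' (0, h, 0) = h \<bullet> gP" for h
  proof -
    have "((\<lambda>y. G (X \<xi>, y, \<xi>)) has_derivative (\<lambda>h. G' (0, h, 0))) (at (P \<xi>))"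
    proof -
      have "((\<lambda>y. (X \<xi>, y, \<xi>)) has_derivative (\<lambda>h. (0, h, 0))) (at (P \<xi>))" by (auto intro!: derivative_eq_intros simp: zero_prod_def)
      from has_derivative_compose[OF this, of G G'] G' show ?thesis by simp
    qed
    moreover have "((\<lambda>y. G (X \<xi>, y, \<xi>)) has_derivative (\<lambda>h. h \<bullet> gP)) (at (P \<xi>))"
      using gP unfolding G_def gderiv_def by simp
    ultimately show ?thesis using has_derivative_unique by metis
  qed
  have e3: "G' (0, 0, h) = h * D" for h
  proof -
    have "((\<lambda>y. G (X \<xi>, P \<xi>, y)) has_derivative (\<lambda>h. G' (0, 0, h))) (at \<xi>)"
    proof -
      have "((\<lambda>y. (X \<xi>, P \<xi>, y)) has_derivative (\<lambda>h. (0, 0, h))) (at \<xi>)" by (auto intro!: derivative_eq_intros simp: zero_prod_def)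
      from has_derivative_compose[OF this, of G G'] G' show ?thesis by simp
    qed
    moreover have "((\<lambda>y. G (X \<xi>, P \<xi>, y)) has_derivative (\<lambda>h. h * D)) (at \<xi>)"
      using dE unfolding G_def has_field_derivative_def by (simp add: mult.commute[of _ D])
    ultimately show ?thesis using has_derivative_unique by metis
  qed
  have dg: "((\<lambda>\<xi>. (X \<xi>, P \<xi>, \<xi>)) has_derivative (\<lambda>h. (h *\<^sub>R gP, h *\<^sub>R (- gX), h))) (at \<xi> within I)"
    using dX dP unfolding has_vector_derivative_def
    by (auto intro!: derivative_eq_intros simp: zero_prod_def)
  have "((\<lambda>\<xi>. G (X \<xi>, P \<xi>, \<xi>)) has_derivative (\<lambda>h. G' (h *\<^sub>R gP, h *\<^sub>R (- gX), h))) (at \<xi> within I)"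
    using has_derivative_compose[OF dg] G' by simp
  moreover have "G' (h *\<^sub>R gP, h *\<^sub>R (- gX), h) = h * D" for h
  proof -
    have "(h *\<^sub>R gP, h *\<^sub>R (- gX), h) = (h *\<^sub>R gP, 0, 0) + ((0, h *\<^sub>R (- gX), 0) + (0, 0, h))"
      by simp
    then have "G' (h *\<^sub>R gP, h *\<^sub>R (- gX), h) = G' (h *\<^sub>R gP, 0, 0) + (G' (0, h *\<^sub>R (- gX), 0) + G' (0, 0, h))"
      by (metis linear_add[OF lin])
    also have "\<dots> = h * D" using e1 e2 e3 by (simp add: inner_commute)
    finally show ?thesis .
  qed
  ultimately show ?thesis unfolding G_def has_field_derivative_def by (simp add: mult.commute[of _ D])
qed


lemma hatf_differentiable:
  assumes F: "\<And>p. (\<lambda>p. f (fst p) (snd p)) differentiable (at p)"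
    and e: "e differentiable (at z within S)" and g: "g differentiable (at z within S)"
  shows "(\<lambda>z. hatf c f (e z) (g z)) differentiable (at z within S)"
proof -
  have g3: "(\<lambda>z. g z $ 3) differentiable (at z within S)"
    using differentiable_compose[of "\<lambda>x. x $ 3" "g" z S, OF bounded_linear_imp_differentiable[OF bounded_linear_vec_nth] g] .
  have "(\<lambda>z. ((e z + g z $ 3) * inverse c, g z)) differentiable (at z within S)"
    using e g g3 by (auto intro!: derivative_intros)
  then have "(\<lambda>z. ((e z + g z $ 3) / c, g z)) differentiable (at z within S)"
    by (simp add: divide_inverse)
  from differentiable_compose[OF F this] show ?thesis unfolding hatf_def by simp
qed

lemma G_differentiable:
  assumes diff: "\<And>p. (\<lambda>p. A0 (fst p) (snd p)) differentiable (at p)"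
              "\<And>p. (\<lambda>p. Ax (fst p) (snd p)) differentiable (at p)"
              "\<And>p. (\<lambda>p. Ay (fst p) (snd p)) differentiable (at p)"
              "\<And>p. (\<lambda>p. Az (fst p) (snd p)) differentiable (at p)"
    and s: "s_hat m c q A0 Az x p \<xi> \<noteq> 0" and m_pos: "m > 0" and c_pos: "c > 0"
  shows "(\<lambda>z::(real^3) \<times> (real^3) \<times> real. H_hat m c q A0 Ax Ay Az (fst z) (fst (snd z)) (snd (snd z)))
            differentiable (at (x, p, \<xi>))"
proof -
  have fx: "(\<lambda>z::(real^3) \<times> (real^3) \<times> real. fst z) differentiable (at w)" for w
    by (intro bounded_linear_imp_differentiable bounded_linear_fst)
  have fp: "(\<lambda>z::(real^3) \<times> (real^3) \<times> real. fst (snd z) $ i) differentiable (at w)" for w i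
    by (intro bounded_linear_imp_differentiable bounded_linear_compose[OF bounded_linear_vec_nth]
        bounded_linear_compose[OF bounded_linear_fst] bounded_linear_snd)
  have fe: "(\<lambda>z::(real^3) \<times> (real^3) \<times> real. snd (snd z)) differentiable (at w)" for w
    by (intro bounded_linear_imp_differentiable bounded_linear_compose[OF bounded_linear_snd] bounded_linear_snd)
  note h = hatf_differentiable[OF _ fe fx]
  show ?thesis
    unfolding H_hat_def s_hat_def v_hat_def ux_hat_def uy_hat_def
    using s m_pos c_pos unfolding s_hat_def
    by (intro derivative_intros h diff fp fe fx) auto
qed


lemma hatf_deriv0:
  assumes "((\<lambda>\<tau>. f \<tau> x) has_real_derivative 0) (at ((\<xi> + x $ 3) / c))" and "c \<noteq> 0"
  shows "((\<lambda>\<eta>. hatf c f \<eta> x) has_real_derivative 0) (at \<xi>)"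
proof -
  have "((\<lambda>\<eta>. (\<eta> + x $ 3) / c) has_real_derivative (1 / c)) (at \<xi>)"
    using assms(2) by (auto intro!: derivative_eq_intros)
  from DERIV_chain2[OF assms(1) this] show ?thesis unfolding hatf_def by simp
qed

lemma eta_deriv:
  assumes diff: "\<And>p. (\<lambda>p. Ax (fst p) (snd p)) differentiable (at p)"
              "\<And>p. (\<lambda>p. Ay (fst p) (snd p)) differentiable (at p)"
    and s: "s_hat m c q A0 Az x p \<xi> \<noteq> 0" and m_pos: "m > 0" and c_pos: "c > 0"
    and t0: "((\<lambda>\<tau>. A0 \<tau> x) has_real_derivative 0) (at ((\<xi> + x $ 3) / c))"
    and tz: "((\<lambda>\<tau>. Az \<tau> x) has_real_derivative 0) (at ((\<xi> + x $ 3) / c))"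
  shows "((\<lambda>\<eta>. H_hat m c q A0 Ax Ay Az x p \<eta>) has_real_derivative
           (m * c\<^sup>2 * (deriv (\<lambda>\<eta>. v_hat m c q Ax Ay x p \<eta>) \<xi> / (2 * s_hat m c q A0 Az x p \<xi>)))) (at \<xi>)"
proof -
  define S where "S = (\<lambda>\<eta>. s_hat m c q A0 Az x p \<eta>)"
  define V where "V = (\<lambda>\<eta>. v_hat m c q Ax Ay x p \<eta>)"
  have cne: "c \<noteq> 0" using c_pos by simp
  have idd: "(\<lambda>\<eta>::real. \<eta>) differentiable (at \<xi>)" by simp
  have cd: "(\<lambda>\<eta>::real. x) differentiable (at \<xi>)" by simp
  note h = hatf_differentiable[OF _ idd cd]
  have "V differentiable (at \<xi>)"
    unfolding V_def v_hat_def ux_hat_def uy_hat_def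
    using m_pos c_pos by (intro derivative_intros h diff) auto
  then have dV: "(V has_real_derivative deriv V \<xi>) (at \<xi>)"
    using DERIV_deriv_iff_real_differentiable by blast
  have dS: "(S has_real_derivative 0) (at \<xi>)"
    unfolding S_def s_hat_def using m_pos c_pos
    by (auto intro!: derivative_eq_intros hatf_deriv0[of A0 x \<xi> c, OF t0 cne] hatf_deriv0[of Az x \<xi> c, OF tz cne])
  have sS: "S \<xi> \<noteq> 0" using s S_def by simp
  have "((\<lambda>\<eta>. m * c\<^sup>2 * (1 + (S \<eta>)\<^sup>2 + V \<eta>) / (2 * S \<eta>) + q * hatf c A0 \<eta> x) has_real_derivative
           (m * c\<^sup>2 * (deriv V \<xi> / (2 * S \<xi>)))) (at \<xi>)"
    using sS m_pos c_pos by (auto intro!: derivative_eq_intros dS dV hatf_deriv0[of A0 x \<xi> c, OF t0 cne] simp: field_simps power2_eq_square)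
  then show ?thesis unfolding S_def V_def H_hat_def .
qed


lemma v_deriv0:
  assumes "((\<lambda>\<tau>. Ax \<tau> x) has_real_derivative 0) (at ((\<xi> + x $ 3) / c))"
    and "((\<lambda>\<tau>. Ay \<tau> x) has_real_derivative 0) (at ((\<xi> + x $ 3) / c))"
    and "c \<noteq> 0" and "m \<noteq> 0"
  shows "deriv (\<lambda>\<eta>. v_hat m c q Ax Ay x p \<eta>) \<xi> = 0"
proof -
  have "((\<lambda>\<eta>. v_hat m c q Ax Ay x p \<eta>) has_real_derivative 0) (at \<xi>)"
    unfolding v_hat_def ux_hat_def uy_hat_def using assms(3,4)
    by (auto intro!: derivative_eq_intros hatf_deriv0[of Ax x \<xi> c, OF assms(1,3)]
          hatf_deriv0[of Ay x \<xi> c, OF assms(2,3)])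
  then show ?thesis by (rule DERIV_imp_deriv)
qed

theorem corollary1:
  fixes m c q :: real
    and A0 Ax Ay Az :: field
    and I :: "real set"
    and X P :: "real \<Rightarrow> real^3"
  assumes m_pos: "m > 0" and c_pos: "c > 0"
    and diff: "\<And>p. (\<lambda>p. A0 (fst p) (snd p)) differentiable (at p)"
              "\<And>p. (\<lambda>p. Ax (fst p) (snd p)) differentiable (at p)"
              "\<And>p. (\<lambda>p. Ay (fst p) (snd p)) differentiable (at p)"
              "\<And>p. (\<lambda>p. Az (fst p) (snd p)) differentiable (at p)"
    and I_int: "is_interval I"
    and s_pos: "\<forall>\<xi>\<in>I. s_hat m c q A0 Az (X \<xi>) (P \<xi>) \<xi> > 0"
    and sol: "hamilton_solution (H_hat m c q A0 Ax Ay Az) I X P"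
  shows
    "(\<forall>U. open U \<and> time_indep_on U A0 \<and> time_indep_on U Ax \<and> time_indep_on U Ay
           \<and> time_indep_on U Az \<and> (\<forall>\<xi>\<in>I. ((\<xi> + X \<xi> $ 3) / c, X \<xi>) \<in> U)
        \<longrightarrow> (\<forall>\<xi>0\<in>I. \<forall>\<xi>1\<in>I.
               H_hat m c q A0 Ax Ay Az (X \<xi>1) (P \<xi>1) \<xi>1
             = H_hat m c q A0 Ax Ay Az (X \<xi>0) (P \<xi>0) \<xi>0))
     \<and>
     (\<forall>U. open U \<and> time_indep_on U A0 \<and> time_indep_on U Az
           \<and> (\<forall>\<xi>\<in>I. ((\<xi> + X \<xi> $ 3) / c, X \<xi>) \<in> U)
        \<longrightarrow> (\<forall>\<xi>0\<in>I. \<forall>\<xi>1\<in>I. \<xi>0 \<le> \<xi>1 \<longrightarrow>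
               ((\<lambda>\<xi>. deriv (\<lambda>\<eta>. v_hat m c q Ax Ay (X \<xi>) (P \<xi>) \<eta>) \<xi>
                        / (2 * s_hat m c q A0 Az (X \<xi>) (P \<xi>) \<xi>))
                has_integral
                  ((H_hat m c q A0 Ax Ay Az (X \<xi>1) (P \<xi>1) \<xi>1
                    - H_hat m c q A0 Ax Ay Az (X \<xi>0) (P \<xi>0) \<xi>0) / (m * c\<^sup>2)))
               {\<xi>0..\<xi>1}))"
proof -
  define h where "h = (\<lambda>\<xi>. H_hat m c q A0 Ax Ay Az (X \<xi>) (P \<xi>) \<xi>)"
  define f where "f = (\<lambda>\<xi>. deriv (\<lambda>\<eta>. v_hat m c q Ax Ay (X \<xi>) (P \<xi>) \<eta>) \<xi>
                        / (2 * s_hat m c q A0 Az (X \<xi>) (P \<xi>) \<xi>))"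
  have key: "(h has_real_derivative (m * c\<^sup>2 * f \<xi>)) (at \<xi> within I)"
    if U: "time_indep_on U A0" "time_indep_on U Az" "\<forall>\<xi>\<in>I. ((\<xi> + X \<xi> $ 3) / c, X \<xi>) \<in> U"
      and xi: "\<xi> \<in> I" for U \<xi>
  proof -
    from sol xi have "\<exists>gP gX.
        GDERIV (\<lambda>p. H_hat m c q A0 Ax Ay Az (X \<xi>) p \<xi>) (P \<xi>) :> gP \<and>
        GDERIV (\<lambda>y. H_hat m c q A0 Ax Ay Az y (P \<xi>) \<xi>) (X \<xi>) :> gX \<and>
        (X has_vector_derivative gP) (at \<xi> within I) \<and>
        (P has_vector_derivative (- gX)) (at \<xi> within I)"
      unfolding hamilton_solution_def by (rule bspec)
    then obtain gP gX where
      g: "GDERIV (\<lambda>p. H_hat m c q A0 Ax Ay Az (X \<xi>) p \<xi>) (P \<xi>) :> gP"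
         "GDERIV (\<lambda>y. H_hat m c q A0 Ax Ay Az y (P \<xi>) \<xi>) (X \<xi>) :> gX"
         "(X has_vector_derivative gP) (at \<xi> within I)"
         "(P has_vector_derivative (- gX)) (at \<xi> within I)"
      by blast
    have "s_hat m c q A0 Az (X \<xi>) (P \<xi>) \<xi> > 0" using s_pos xi by blast
    then have sne: "s_hat m c q A0 Az (X \<xi>) (P \<xi>) \<xi> \<noteq> 0" by linarith
    have inU: "((\<xi> + X \<xi> $ 3) / c, X \<xi>) \<in> U" using U(3) xi by blast
    have t0: "((\<lambda>\<tau>. A0 \<tau> (X \<xi>)) has_real_derivative 0) (at ((\<xi> + X \<xi> $ 3) / c))"
      using U(1) inU unfolding time_indep_on_def by blast
    have tz: "((\<lambda>\<tau>. Az \<tau> (X \<xi>)) has_real_derivative 0) (at ((\<xi> + X \<xi> $ 3) / c))"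
      using U(2) inU unfolding time_indep_on_def by blast
    have dG: "(\<lambda>z::(real^3) \<times> (real^3) \<times> real. H_hat m c q A0 Ax Ay Az (fst z) (fst (snd z)) (snd (snd z)))
            differentiable (at (X \<xi>, P \<xi>, \<xi>))"
      by (rule G_differentiable[OF diff sne m_pos c_pos])
    have dE: "((\<lambda>\<eta>. H_hat m c q A0 Ax Ay Az (X \<xi>) (P \<xi>) \<eta>) has_real_derivative
           (m * c\<^sup>2 * (deriv (\<lambda>\<eta>. v_hat m c q Ax Ay (X \<xi>) (P \<xi>) \<eta>) \<xi> / (2 * s_hat m c q A0 Az (X \<xi>) (P \<xi>) \<xi>)))) (at \<xi>)"
      by (rule eta_deriv[OF diff(2,3) sne m_pos c_pos t0 tz])
    have "((\<lambda>\<xi>. H_hat m c q A0 Ax Ay Az (X \<xi>) (P \<xi>) \<xi>) has_real_derivative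
           (m * c\<^sup>2 * (deriv (\<lambda>\<eta>. v_hat m c q Ax Ay (X \<xi>) (P \<xi>) \<eta>) \<xi> / (2 * s_hat m c q A0 Az (X \<xi>) (P \<xi>) \<xi>)))) (at \<xi> within I)"
      by (rule traj_deriv[where Hf="H_hat m c q A0 Ax Ay Az" and X=X and P=P and I=I and gP=gP and gX=gX, OF dG g dE])
    then show ?thesis unfolding h_def f_def .
  qed
  have sub: "{a..b} \<subseteq> I" if "a \<in> I" "b \<in> I" for a b
    using mem_is_interval_1_I[OF I_int that] by auto
  have h_eq: "\<And>\<xi>. H_hat m c q A0 Ax Ay Az (X \<xi>) (P \<xi>) \<xi> = h \<xi>" unfolding h_def by simp
  have f_eq: "(\<lambda>\<xi>. deriv (\<lambda>\<eta>. v_hat m c q Ax Ay (X \<xi>) (P \<xi>) \<eta>) \<xi>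
                        / (2 * s_hat m c q A0 Az (X \<xi>) (P \<xi>) \<xi>)) = f" unfolding f_def by simp
  show ?thesis unfolding h_eq f_eq
  proof (intro conjI allI impI ballI)
    fix U \<xi>0 \<xi>1
    assume U: "open U \<and> time_indep_on U A0 \<and> time_indep_on U Ax \<and> time_indep_on U Ay
           \<and> time_indep_on U Az \<and> (\<forall>\<xi>\<in>I. ((\<xi> + X \<xi> $ 3) / c, X \<xi>) \<in> U)"
      and x0: "\<xi>0 \<in> I" and x1: "\<xi>1 \<in> I"
    from U have U0: "time_indep_on U A0" and Ux: "time_indep_on U Ax" and Uy: "time_indep_on U Ay"
      and Uz: "time_indep_on U Az" and Ut: "\<forall>\<xi>\<in>I. ((\<xi> + X \<xi> $ 3) / c, X \<xi>) \<in> U" by blast+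
    have "(h has_real_derivative 0) (at \<xi> within I)" if xi: "\<xi> \<in> I" for \<xi>
    proof -
      have inU: "((\<xi> + X \<xi> $ 3) / c, X \<xi>) \<in> U" using Ut xi by blast
      have tx: "((\<lambda>\<tau>. Ax \<tau> (X \<xi>)) has_real_derivative 0) (at ((\<xi> + X \<xi> $ 3) / c))"
        using Ux inU unfolding time_indep_on_def by blast
      have ty: "((\<lambda>\<tau>. Ay \<tau> (X \<xi>)) has_real_derivative 0) (at ((\<xi> + X \<xi> $ 3) / c))"
        using Uy inU unfolding time_indep_on_def by blast
      have "deriv (\<lambda>\<eta>. v_hat m c q Ax Ay (X \<xi>) (P \<xi>) \<eta>) \<xi> = 0"
        using v_deriv0[where Ax=Ax and Ay=Ay and x="X \<xi>" and \<xi>=\<xi> and c=c and m=m and q=q and p="P \<xi>", OF tx ty] c_pos m_pos by simp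
      then have "f \<xi> = 0" unfolding f_def by simp
      with key[OF U0 Uz Ut xi] show ?thesis by simp
    qed
    then obtain k where "\<forall>x\<in>I. h x = k"
      using has_field_derivative_zero_constant[OF is_interval_convex[OF I_int]] by blast
    then show "h \<xi>1 = h \<xi>0"
      using x0 x1 by auto
  next
    fix U \<xi>0 \<xi>1
    assume U: "open U \<and> time_indep_on U A0 \<and> time_indep_on U Az
           \<and> (\<forall>\<xi>\<in>I. ((\<xi> + X \<xi> $ 3) / c, X \<xi>) \<in> U)"
      and x0: "\<xi>0 \<in> I" and x1: "\<xi>1 \<in> I" and le: "\<xi>0 \<le> \<xi>1"
    from U have U0: "time_indep_on U A0" 
      and Uz: "time_indep_on U Az" and Ut: "\<forall>\<xi>\<in>I. ((\<xi> + X \<xi> $ 3) / c, X \<xi>) \<in> U" by blast+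
    have "((\<lambda>\<xi>. h \<xi> / (m * c\<^sup>2)) has_vector_derivative f \<xi>) (at \<xi> within {\<xi>0..\<xi>1})"
      if xi: "\<xi> \<in> {\<xi>0..\<xi>1}" for \<xi>
    proof -
      have xI: "\<xi> \<in> I" using sub[OF x0 x1] xi by blast
      have "(h has_real_derivative (m * c\<^sup>2 * f \<xi>)) (at \<xi> within {\<xi>0..\<xi>1})"
        using DERIV_subset[OF key[OF U0 Uz Ut xI] sub[OF x0 x1]] .
      then have "((\<lambda>\<xi>. h \<xi> / (m * c\<^sup>2)) has_real_derivative (m * c\<^sup>2 * f \<xi>) / (m * c\<^sup>2)) (at \<xi> within {\<xi>0..\<xi>1})"
        by (rule DERIV_cdivide)
      moreover have "(m * c\<^sup>2 * f \<xi>) / (m * c\<^sup>2) = f \<xi>" using m_pos c_pos by simp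
      ultimately show ?thesis
        by (simp add: has_real_derivative_iff_has_vector_derivative)
    qed
    from fundamental_theorem_of_calculus[OF le this]
    show "(f has_integral (h \<xi>1 - h \<xi>0) / (m * c\<^sup>2)) {\<xi>0..\<xi>1}"
      by (simp add: diff_divide_distrib)
  qed
qed

end
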